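(* Let $\rho_{AB}$ be positive semidefinite on $\mathcal{H}_A\otimes\mathcal{H}_B$ with $0<\operatorname{tr}\rho_{AB}\le1$. Then $$\hat H_{\min}(A|B)_\rho\le H_{\min}(A|B)_\rho-\log\frac{1}{\operatorname{tr}\rho_{AB}}.$$
   Context: Hilbert spaces are finite-dimensional; $\log$ is binary. $D_{\max}(\rho\|\tau)=\inf\{\lambda\in\mathbb{R}:\rho\le2^\lambda\tau\}$. $H_{\min}(A|B)_\rho=\max_{\sigma_B}-D_{\max}(\rho_{AB}\|\mathbb{1}_A\otimes\sigma_B)$, max over normalized density operators $\sigma_B$; $\hat H_{\min}(A|B)_\rho=-D_{\max}(\rho_{AB}\|\mathbb{1}_A\otimes\rho_B)$ with $\rho_B=\operatorname{tr}_A\rho_{AB}$. *)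

theory Defs
  imports Complex_Main "HOL-Library.Extended_Real"
begin

text \<open>Operators on a finite-dimensional Hilbert space with orthonormal basis indexed by a
finite type 'i are represented as matrices  'i => 'i => complex.
H_A (x) H_B has basis indexed by 'a \<times> 'b.\<close>

type_synonym 'i op = "'i \<Rightarrow> 'i \<Rightarrow> complex"

definition hermitian :: "'i::finite op \<Rightarrow> bool" where
  "hermitian M \<longleftrightarrow> (\<forall>i j. M j i = cnj (M i j))"

definition qform :: "'i::finite op \<Rightarrow> ('i \<Rightarrow> complex) \<Rightarrow> complex" where
  "qform M v = (\<Sum>i\<in>UNIV. \<Sum>j\<in>UNIV. cnj (v i) * M i j * v j)"

definition psd :: "'i::finite op \<Rightarrow> bool" where
  "psd M \<longleftrightarrow> hermitian M \<and> (\<forall>v. Im (qform M v) = 0 \<and> 0 \<le> Re (qform M v))"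

definition loewner_le :: "'i::finite op \<Rightarrow> 'i op \<Rightarrow> bool" where
  "loewner_le M N \<longleftrightarrow> psd (\<lambda>i j. N i j - M i j)"

definition tr :: "'i::finite op \<Rightarrow> complex" where
  "tr M = (\<Sum>i\<in>UNIV. M i i)"

definition density :: "'i::finite op \<Rightarrow> bool" where
  "density \<sigma> \<longleftrightarrow> psd \<sigma> \<and> tr \<sigma> = 1"

definition ptrA :: "('a::finite \<times> 'b::finite) op \<Rightarrow> 'b op" where
  "ptrA \<rho> = (\<lambda>b b'. \<Sum>a\<in>UNIV. \<rho> (a, b) (a, b'))"

definition id_tensor :: "'b::finite op \<Rightarrow> ('a::finite \<times> 'b) op" where
  "id_tensor \<sigma> = (\<lambda>(a, b) (a', b'). if a = a' then \<sigma> b b' else 0)"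

definition Dmax :: "'i::finite op \<Rightarrow> 'i op \<Rightarrow> ereal" where
  "Dmax \<rho> \<tau> = Inf {ereal l | l. loewner_le \<rho> (\<lambda>i j. complex_of_real (2 powr l) * \<tau> i j)}"

definition Hmin :: "('a::finite \<times> 'b::finite) op \<Rightarrow> ereal" where
  "Hmin \<rho> = Sup {- Dmax \<rho> (id_tensor \<sigma> :: ('a \<times> 'b) op) | \<sigma>. density \<sigma>}"

definition Hmin_hat :: "('a::finite \<times> 'b::finite) op \<Rightarrow> ereal" where
  "Hmin_hat \<rho> = - Dmax \<rho> (id_tensor (ptrA \<rho>) :: ('a \<times> 'b) op)"

end

theory Submission imports Defs begin

definition wv :: "'a \<Rightarrow> ('b \<Rightarrow> complex) \<Rightarrow> ('a::finite \<times> 'b::finite) \<Rightarrow> complex" where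
  "wv a v = (\<lambda>(a',b). if a' = a then v b else 0)"

lemma sum_prod_UNIV: "(\<Sum>x\<in>(UNIV::('a::finite\<times>'b::finite) set). f x) = (\<Sum>a\<in>UNIV. \<Sum>b\<in>UNIV. f (a,b))"
  by (simp add: sum.cartesian_product UNIV_Times_UNIV[symmetric] del: UNIV_Times_UNIV)

lemma sum_if_const: "(\<Sum>x\<in>A. if P then f x else 0) = (if P then sum f A else 0)"
  by simp

lemma wv_apply[simp]: "wv a v (x,y) = (if x = a then v y else 0)"
  by (simp add: wv_def)

lemma qform_wv: "qform \<rho> (wv a v) = (\<Sum>b\<in>UNIV. \<Sum>b'\<in>UNIV. cnj (v b) * \<rho> (a,b) (a,b') * v b')"
proof -
  have inner: "(\<Sum>a2\<in>UNIV. \<Sum>b2\<in>UNIV. cnj (wv a v (a1,b1)) * \<rho> (a1,b1) (a2,b2) * wv a v (a2,b2))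
     = (if a1 = a then (\<Sum>b2\<in>UNIV. cnj (v b1) * \<rho> (a,b1) (a,b2) * v b2) else 0)" for a1 b1
    by (simp add: if_distrib[where f="\<lambda>x. _ * x"] sum_if_const cong: if_cong)
  show ?thesis
    unfolding qform_def sum_prod_UNIV inner
    by (simp add: sum_if_const)
qed

lemma qform_ptrA: "qform (ptrA \<rho>) v = (\<Sum>a\<in>UNIV. qform \<rho> (wv a v))"
proof -
  have "qform (ptrA \<rho>) v = (\<Sum>b\<in>UNIV. \<Sum>b'\<in>UNIV. \<Sum>a\<in>UNIV. cnj (v b) * \<rho> (a,b) (a,b') * v b')"
    unfolding qform_def ptrA_def by (simp add: sum_distrib_left sum_distrib_right)
  also have "\<dots> = (\<Sum>b\<in>UNIV. \<Sum>a\<in>UNIV. \<Sum>b'\<in>UNIV. cnj (v b) * \<rho> (a,b) (a,b') * v b')"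
    by (rule sum.cong[OF refl], rule sum.swap)
  also have "\<dots> = (\<Sum>a\<in>UNIV. \<Sum>b\<in>UNIV. \<Sum>b'\<in>UNIV. cnj (v b) * \<rho> (a,b) (a,b') * v b')"
    by (rule sum.swap)
  finally show ?thesis unfolding qform_wv .
qed

lemma herm_diag_real: "hermitian M \<Longrightarrow> Im (M i i) = 0"
proof -
  assume "hermitian M"
  then have "M i i = cnj (M i i)" unfolding hermitian_def by blast
  then have "Im (M i i) = - Im (M i i)" by (metis complex_cnj_cnj cnj.sel(2))
  then show ?thesis by simp
qed

lemma tr_real: "hermitian M \<Longrightarrow> tr M = complex_of_real (Re (tr M))"
  unfolding tr_def by (simp add: complex_eq_iff Im_sum herm_diag_real)

lemma tr_ptrA: "tr (ptrA \<rho>) = tr \<rho>"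
  unfolding tr_def ptrA_def sum_prod_UNIV by (rule sum.swap)

lemma density_sigma:
  assumes "psd \<rho>" "0 < t" "tr \<rho> = complex_of_real t"
  shows "density (\<lambda>b b'. ptrA \<rho> b b' / complex_of_real t)"
proof -
  have h: "hermitian \<rho>" using assms(1) psd_def by blast
  have herm: "hermitian (\<lambda>b b'. ptrA \<rho> b b' / complex_of_real t)"
    unfolding hermitian_def ptrA_def
  proof (intro allI)
    fix i j
    have "(\<Sum>a\<in>UNIV. \<rho> (a, j) (a, i)) = (\<Sum>a\<in>UNIV. cnj (\<rho> (a, i) (a, j)))"
      using h unfolding hermitian_def by (intro sum.cong) blast+
    then show "(\<Sum>a\<in>UNIV. \<rho> (a, j) (a, i)) / complex_of_real t = cnj ((\<Sum>a\<in>UNIV. \<rho> (a, i) (a, j)) / complex_of_real t)"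
      by (simp add: cnj_sum)
  qed
  have q: "qform (\<lambda>b b'. ptrA \<rho> b b' / complex_of_real t) v = qform (ptrA \<rho>) v / complex_of_real t" for v
    unfolding qform_def sum_divide_distrib by (simp add: divide_simps)
  have "Im (qform (ptrA \<rho>) v) = 0 \<and> 0 \<le> Re (qform (ptrA \<rho>) v)" for v
  proof -
    have p: "Im (qform \<rho> w) = 0 \<and> 0 \<le> Re (qform \<rho> w)" for w
      using assms(1) unfolding psd_def by blast
    have "Im (qform (ptrA \<rho>) v) = (\<Sum>a\<in>UNIV. Im (qform \<rho> (wv a v)))"
      unfolding qform_ptrA by (rule Im_sum)
    also have "\<dots> = 0" using p by simp
    finally have 1: "Im (qform (ptrA \<rho>) v) = 0" .
    have "Re (qform (ptrA \<rho>) v) = (\<Sum>a\<in>UNIV. Re (qform \<rho> (wv a v)))"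
      unfolding qform_ptrA by (rule Re_sum)
    also have "\<dots> \<ge> 0" using p by (intro sum_nonneg) blast
    finally show ?thesis using 1 by simp
  qed
  then have "Im (qform (\<lambda>b b'. ptrA \<rho> b b' / complex_of_real t) v) = 0 \<and> 0 \<le> Re (qform (\<lambda>b b'. ptrA \<rho> b b' / complex_of_real t) v)" for v
    using assms(2) unfolding q by (simp add: Im_divide_of_real Re_divide_of_real)
  moreover have "tr (\<lambda>b b'. ptrA \<rho> b b' / complex_of_real t) = tr (ptrA \<rho>) / complex_of_real t"
    unfolding tr_def by (rule sum_divide_distrib[symmetric])
  then have "tr (\<lambda>b b'. ptrA \<rho> b b' / complex_of_real t) = 1"
    using assms(2,3) tr_ptrA[of \<rho>] by simp
  ultimately show ?thesis using herm unfolding density_def psd_def by blast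
qed


lemma scale_eq:
  assumes "0 < t"
  shows "(\<lambda>i j. complex_of_real (2 powr (l + log 2 t)) * (id_tensor (\<lambda>b b'. P b b' / complex_of_real t) :: ('a::finite\<times>'b::finite) op) i j)
       = (\<lambda>i j. complex_of_real (2 powr l) * (id_tensor P :: ('a\<times>'b) op) i j)"
proof -
  have "2 powr (l + log 2 t) = 2 powr l * t" using assms by (simp add: powr_add)
  then show ?thesis using assms
    by (auto simp: id_tensor_def fun_eq_iff split: prod.splits)
qed

lemma Dmax_le:
  assumes "0 < t"
  shows "Dmax \<rho> (id_tensor (\<lambda>b b'. P b b' / complex_of_real t) :: ('a::finite\<times>'b::finite) op)
     \<le> Dmax \<rho> (id_tensor P :: ('a\<times>'b) op) + ereal (log 2 t)"
proof -
  define D' where "D' = Dmax \<rho> (id_tensor (\<lambda>b b'. P b b' / complex_of_real t) :: ('a\<times>'b) op)"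
  have "D' - ereal (log 2 t) \<le> x" if xS: "x \<in> {ereal l | l. loewner_le \<rho> (\<lambda>i j. complex_of_real (2 powr l) * (id_tensor P :: ('a\<times>'b) op) i j)}" for x
  proof -
    obtain l where x: "x = ereal l" and l: "loewner_le \<rho> (\<lambda>i j. complex_of_real (2 powr l) * (id_tensor P :: ('a\<times>'b) op) i j)"
      using xS by auto
    have l': "loewner_le \<rho> (\<lambda>i j. complex_of_real (2 powr (l + log 2 t)) * (id_tensor (\<lambda>b b'. P b b' / complex_of_real t) :: ('a\<times>'b) op) i j)"
      using l by (simp only: scale_eq[OF assms, of l P])
    have "D' \<le> ereal (l + log 2 t)"
      unfolding D'_def Dmax_def using l'
      by (intro Inf_lower) blast
    then show ?thesis unfolding x by (simp add: ereal_minus_le_iff)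
  qed
  then have "D' - ereal (log 2 t) \<le> Dmax \<rho> (id_tensor P :: ('a\<times>'b) op)"
    unfolding Dmax_def by (rule Inf_greatest)
  then show ?thesis unfolding D'_def[symmetric] by (simp add: ereal_minus_le_iff)
qed

theorem lemma14:
  fixes \<rho> :: "('a::finite \<times> 'b::finite) op"
  assumes "psd \<rho>"
    and "0 < Re (tr \<rho>)" and "Re (tr \<rho>) \<le> 1"
  shows "Hmin_hat \<rho> \<le> Hmin \<rho> - ereal (log 2 (1 / Re (tr \<rho>)))"
proof -
  define t where "t = Re (tr \<rho>)"
  have t0: "0 < t" using assms t_def by simp
  have trt: "tr \<rho> = complex_of_real t" unfolding t_def
    using assms(1) tr_real psd_def by blast
  define \<sigma> where "\<sigma> = (\<lambda>b b'. ptrA \<rho> b b' / complex_of_real t)"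
  have den: "density \<sigma>" unfolding \<sigma>_def by (rule density_sigma[OF assms(1) t0 trt])
  define D where "D = Dmax \<rho> (id_tensor (ptrA \<rho>) :: ('a\<times>'b) op)"
  define D' where "D' = Dmax \<rho> (id_tensor \<sigma> :: ('a\<times>'b) op)"
  have DD: "D' \<le> D + ereal (log 2 t)" unfolding D_def D'_def \<sigma>_def by (rule Dmax_le[OF t0])
  have H: "- D' \<le> Hmin \<rho>" unfolding Hmin_def D'_def
    using den by (intro Sup_upper) blast
  have lg: "log 2 (1 / t) = - log 2 t" using t0 by (simp add: log_divide)
  have "- D \<le> Hmin \<rho> + ereal (log 2 t)"
  proof -
    have "- D - ereal (log 2 t) \<le> - D'" using DD
      by (cases D; cases D'; simp)
    from this H have "- D - ereal (log 2 t) \<le> Hmin \<rho>" by (rule order_trans)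
    then show ?thesis by (simp add: ereal_minus_le_iff)
  qed
  then show ?thesis unfolding Hmin_hat_def D_def[symmetric] t_def[symmetric] lg
    by (simp add: minus_ereal_def)
qed

end
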